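(* Let $k \geq 3$ be an odd integer. Any non-reducible partial $k$-star design of order $3k+1$ with four stars is completable.
   Context: A $k$-star is a copy of $K_{1,k}$; its vertex of degree $k$ is the centre and the others are leaves. A partial $k$-star design of order $n$ is a pair $(V,\mathcal{A})$ where $V$ is a set of $n$ vertices and $\mathcal{A}$ is a set of edge-disjoint $k$-stars that are subgraphs of the complete graph $K_V$; it is completable if there is a set $\mathcal{B}\supseteq\mathcal{A}$ of edge-disjoint $k$-stars in $K_V$ covering all edges of $K_V$. Let \[u(n,k)= \begin{cases} 2 \lfloor \frac{n-2}{k} \rfloor-1 & \text{if $n \not \equiv 1\pmod{k}$},\\ \frac{2(n-1)}{k} - 2 & \text{if $n \equiv 1\pmod{k}$.} \end{cases} \] A partial $k$-star design $(V,\mathcal{A})$ of order $n$ is reducible if $n \equiv 1 \pmod{k}$, $|\mathcal{A}|=u(n,k)$, and there is a vertex which is the centre of at least one star in $\mathcal{A}$ and is not a leaf of any star in $\mathcal{A}$; otherwise it is non-reducible. *)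

theory Defs
  imports Main
begin

text \<open>A k-star in K_V is represented as a pair (centre, set of leaves).\<close>

definition is_star :: "nat \<Rightarrow> 'a set \<Rightarrow> 'a \<times> 'a set \<Rightarrow> bool" where
  "is_star k V S \<longleftrightarrow> fst S \<in> V \<and> snd S \<subseteq> V - {fst S} \<and> finite (snd S) \<and> card (snd S) = k"

definition star_edges :: "'a \<times> 'a set \<Rightarrow> 'a set set" where
  "star_edges S = (\<lambda>x. {fst S, x}) ` snd S"

definition complete_edges :: "'a set \<Rightarrow> 'a set set" where
  "complete_edges V = {e. \<exists>x\<in>V. \<exists>y\<in>V. x \<noteq> y \<and> e = {x, y}}"

definition partial_star_design :: "nat \<Rightarrow> 'a set \<Rightarrow> ('a \<times> 'a set) set \<Rightarrow> bool" where
  "partial_star_design k V A \<longleftrightarrow> finite V \<and> (\<forall>S\<in>A. is_star k V S) \<and>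
     (\<forall>S\<in>A. \<forall>T\<in>A. S \<noteq> T \<longrightarrow> star_edges S \<inter> star_edges T = {})"

definition completable :: "nat \<Rightarrow> 'a set \<Rightarrow> ('a \<times> 'a set) set \<Rightarrow> bool" where
  "completable k V A \<longleftrightarrow> (\<exists>B. A \<subseteq> B \<and> partial_star_design k V B \<and>
     \<Union> (star_edges ` B) = complete_edges V)"

definition u_bound :: "nat \<Rightarrow> nat \<Rightarrow> int" where
  "u_bound n k = (if n mod k \<noteq> 1 mod k then 2 * ((int n - 2) div int k) - 1
                  else 2 * (int n - 1) div int k - 2)"

definition reducible :: "nat \<Rightarrow> 'a set \<Rightarrow> ('a \<times> 'a set) set \<Rightarrow> bool" where
  "reducible k V A \<longleftrightarrow> card V mod k = 1 mod k \<and> int (card A) = u_bound (card V) k \<and>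
     (\<exists>v. (\<exists>S\<in>A. fst S = v) \<and> (\<forall>S\<in>A. v \<notin> snd S))"

end

theory Submission
  imports Defs
begin

definition tourn :: "'a set \<Rightarrow> ('a \<times> 'a) set \<Rightarrow> bool" where
  "tourn V D \<longleftrightarrow> D \<subseteq> V \<times> V \<and> (\<forall>x y. (x,y) \<in> D \<longrightarrow> (y,x) \<notin> D) \<and>
     (\<forall>x\<in>V. \<forall>y\<in>V. x \<noteq> y \<longrightarrow> (x,y) \<in> D \<or> (y,x) \<in> D)"

definition outd :: "('a \<times> 'a) set \<Rightarrow> 'a \<Rightarrow> nat" where
  "outd D x = card {y. (x,y) \<in> D}"

definition flip :: "('a \<times> 'a) set \<Rightarrow> 'a \<Rightarrow> 'a \<Rightarrow> ('a \<times> 'a) set" where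
  "flip D a b = (D - {(a,b)}) \<union> {(b,a)}"

lemma relpow_mono_set: "(R::('a\<times>'a) set) \<subseteq> S \<Longrightarrow> R ^^ n \<subseteq> S ^^ n"
proof (induction n)
  case 0
  then show ?case by simp
next
  case (Suc n)
  then show ?case by (simp add: relcomp_mono)
qed

lemma relpow_use:
  "(x,y) \<in> R ^^ n \<Longrightarrow> (x,y) \<in> (R - {(a,b)}) ^^ n \<or> (\<exists>j<n. (x,a) \<in> (R - {(a,b)}) ^^ j)"
proof (induction n arbitrary: y)
  case 0
  then show ?case by simp
next
  case (Suc n)
  then obtain z where xz: "(x,z) \<in> R ^^ n" and zy: "(z,y) \<in> R" by auto
  show ?case
  proof (cases "(z,y) = (a,b)")
    case True
    then have "z = a" by simp
    from Suc.IH[OF xz] show ?thesis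
    proof
      assume "(x, z) \<in> (R - {(a, b)}) ^^ n"
      then have "(x, a) \<in> (R - {(a, b)}) ^^ n" using \<open>z = a\<close> by simp
      then show ?thesis by blast
    next
      assume "\<exists>j<n. (x, a) \<in> (R - {(a, b)}) ^^ j"
      then show ?thesis using less_Suc_eq by blast
    qed
  next
    case False
    with zy have zy': "(z,y) \<in> R - {(a,b)}" by simp
    from Suc.IH[OF xz] show ?thesis
    proof
      assume "(x, z) \<in> (R - {(a, b)}) ^^ n"
      with zy' have "(x,y) \<in> (R - {(a, b)}) ^^ Suc n" by auto
      then show ?thesis by simp
    next
      assume "\<exists>j<n. (x, a) \<in> (R - {(a, b)}) ^^ j"
      then show ?thesis using less_Suc_eq by blast
    qed
  qed
qed

lemma finite_tourn: "finite V \<Longrightarrow> tourn V D \<Longrightarrow> finite D"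
  unfolding tourn_def using finite_subset by blast

lemma tournD:
  assumes "tourn V D"
  shows "D \<subseteq> V \<times> V" "(x,x) \<notin> D"
    "(a,b) \<in> D \<Longrightarrow> (b,a) \<notin> D"
    "a \<in> V \<Longrightarrow> b \<in> V \<Longrightarrow> a \<noteq> b \<Longrightarrow> (a,b) \<notin> D \<Longrightarrow> (b,a) \<in> D"
  using assms unfolding tourn_def by blast+

lemma outd_flip:
  assumes "finite V" "tourn V D" "(a,b) \<in> D"
  shows "outd (flip D a b) a = outd D a - 1"
    and "outd (flip D a b) b = Suc (outd D b)"
    and "x \<noteq> a \<Longrightarrow> x \<noteq> b \<Longrightarrow> outd (flip D a b) x = outd D x"
    and "outd D a \<ge> 1"
proof -
  have fin: "\<And>z. finite {y. (z,y) \<in> D}"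
  proof -
    fix z
    have "{y. (z,y) \<in> D} \<subseteq> V" using assms(2) unfolding tourn_def by blast
    then show "finite {y. (z,y) \<in> D}" using assms(1) finite_subset by blast
  qed
  have ab: "a \<noteq> b" using tournD(2)[OF assms(2)] assms(3) by auto
  have ba: "(b,a) \<notin> D" using tournD(3)[OF assms(2,3)] .
  have "{y. (a,y) \<in> flip D a b} = {y. (a,y) \<in> D} - {b}"
    using ab unfolding flip_def by auto
  then show "outd (flip D a b) a = outd D a - 1"
    unfolding outd_def using assms(3) fin by simp
  have "{y. (b,y) \<in> flip D a b} = insert a {y. (b,y) \<in> D}"
    using ab unfolding flip_def by auto
  then show "outd (flip D a b) b = Suc (outd D b)"
    unfolding outd_def using ba fin by simp
  show "x \<noteq> a \<Longrightarrow> x \<noteq> b \<Longrightarrow> outd (flip D a b) x = outd D x"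
  proof -
    assume "x \<noteq> a" "x \<noteq> b"
    then have "{y. (x,y) \<in> flip D a b} = {y. (x,y) \<in> D}" unfolding flip_def by blast
    then show ?thesis unfolding outd_def by simp
  qed
  have "b \<in> {y. (a,y) \<in> D}" using assms(3) by simp
  then have "card {y. (a,y) \<in> D} > 0" using fin[of a] card_gt_0_iff by blast
  then show "outd D a \<ge> 1" unfolding outd_def by simp
qed

lemma tourn_flip:
  assumes "tourn V D" "(a,b) \<in> D"
  shows "tourn V (flip D a b)"
proof -
  have sub: "D \<subseteq> V \<times> V" using tournD[OF assms(1)] by blast
  have abV: "a \<in> V" "b \<in> V" using sub assms(2) by auto
  have ba: "(b,a) \<notin> D" using tournD(3)[OF assms] .
  show ?thesis unfolding tourn_def flip_def
  proof (intro conjI ballI allI impI)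
    show "D - {(a, b)} \<union> {(b, a)} \<subseteq> V \<times> V" using sub abV by blast
  next
    fix x y assume "(x, y) \<in> D - {(a, b)} \<union> {(b, a)}"
    then show "(y, x) \<notin> D - {(a, b)} \<union> {(b, a)}"
      using tournD(3)[OF assms(1)] ba assms(2) by auto
  next
    fix x y assume xy: "x \<in> V" "y \<in> V" "x \<noteq> y"
    show "(x, y) \<in> D - {(a, b)} \<union> {(b, a)} \<or> (y, x) \<in> D - {(a, b)} \<union> {(b, a)}"
      using tournD(4)[OF assms(1) xy] by blast
  qed
qed

lemma path_flip:
  assumes finV: "finite V"
  shows "tourn V D \<Longrightarrow> F \<subseteq> D \<Longrightarrow> (v,u) \<in> (D - F) ^^ (Suc n) \<Longrightarrow>
    (\<forall>i<Suc n. (v,u) \<notin> (D - F) ^^ i) \<Longrightarrow>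
    \<exists>D'. tourn V D' \<and> F \<subseteq> D' \<and> outd D' v = outd D v - 1 \<and> outd D' u = Suc (outd D u) \<and>
       (\<forall>x. x \<noteq> v \<longrightarrow> x \<noteq> u \<longrightarrow> outd D' x = outd D x)"
proof (induction n arbitrary: D u)
  case 0
  then have vu: "(v,u) \<in> D" "(v,u) \<notin> F" by auto
  have "v \<noteq> u" using "0.prems"(4) by auto
  show ?case
  proof (intro exI conjI)
    show "tourn V (flip D v u)" using tourn_flip[OF "0.prems"(1) vu(1)] .
    show "F \<subseteq> flip D v u" using "0.prems"(2) vu(2) unfolding flip_def by blast
    show "outd (flip D v u) v = outd D v - 1" using outd_flip(1)[OF finV "0.prems"(1) vu(1)] .
    show "outd (flip D v u) u = Suc (outd D u)" using outd_flip(2)[OF finV "0.prems"(1) vu(1)] .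
    show "\<forall>x. x \<noteq> v \<longrightarrow> x \<noteq> u \<longrightarrow> outd (flip D v u) x = outd D x"
      using outd_flip(3)[OF finV "0.prems"(1) vu(1)] by blast
  qed
next
  case (Suc n)
  define R where "R = D - F"
  from Suc.prems(3) obtain w where vw: "(v,w) \<in> R ^^ Suc n" and wu: "(w,u) \<in> R"
    unfolding R_def by auto
  have min: "\<And>i. i < Suc (Suc n) \<Longrightarrow> (v,u) \<notin> R ^^ i" using Suc.prems(4) unfolding R_def by blast
  have wuD: "(w,u) \<in> D" and wuF: "(w,u) \<notin> F" using wu unfolding R_def by auto
  have uwD: "(u,w) \<notin> D" using tournD(3)[OF Suc.prems(1) wuD] .
  have uwF: "(u,w) \<notin> F" using uwD Suc.prems(2) by blast
  define D1 where "D1 = flip D w u"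
  define R1 where "R1 = D1 - F"
  have R1eq: "R1 = (R - {(w,u)}) \<union> {(u,w)}"
    unfolding R1_def D1_def R_def flip_def using uwF by blast
  have t1: "tourn V D1" unfolding D1_def using tourn_flip[OF Suc.prems(1) wuD] .
  have F1: "F \<subseteq> D1" unfolding D1_def flip_def using Suc.prems(2) wuF by blast
  have vw1: "(v,w) \<in> R1 ^^ Suc n"
  proof -
    from relpow_use[OF vw, of w u] show ?thesis
    proof
      assume "(v, w) \<in> (R - {(w, u)}) ^^ Suc n"
      moreover have "(R - {(w, u)}) ^^ Suc n \<subseteq> R1 ^^ Suc n"
        by (rule relpow_mono_set) (auto simp: R1eq)
      ultimately show ?thesis by blast
    next
      assume "\<exists>j<Suc n. (v, w) \<in> (R - {(w, u)}) ^^ j"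
      then obtain j where j: "j < Suc n" "(v, w) \<in> (R - {(w, u)}) ^^ j" by blast
      have "(R - {(w, u)}) ^^ j \<subseteq> R ^^ j" by (rule relpow_mono_set) auto
      with j have "(v,w) \<in> R ^^ j" by blast
      with wu have "(v,u) \<in> R ^^ Suc j" by auto
      with min[of "Suc j"] j(1) show ?thesis by simp
    qed
  qed
  have min1: "\<forall>i<Suc n. (v,w) \<notin> R1 ^^ i"
  proof (intro allI impI notI)
    fix i assume i: "i < Suc n" and vwi: "(v,w) \<in> R1 ^^ i"
    have sub: "R1 - {(u,w)} \<subseteq> R" unfolding R1eq by blast
    from relpow_use[OF vwi, of u w] show False
    proof
      assume "(v, w) \<in> (R1 - {(u, w)}) ^^ i"
      then have "(v,w) \<in> R ^^ i" using relpow_mono_set[OF sub] by blast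
      with wu have "(v,u) \<in> R ^^ Suc i" by auto
      with min[of "Suc i"] i show False by simp
    next
      assume "\<exists>j<i. (v, u) \<in> (R1 - {(u, w)}) ^^ j"
      then obtain j where j: "j < i" "(v, u) \<in> (R1 - {(u, w)}) ^^ j" by blast
      then have "(v,u) \<in> R ^^ j" using relpow_mono_set[OF sub] by blast
      with min[of j] j(1) i show False by simp
    qed
  qed
  have vu: "v \<noteq> u" using min[of 0] by auto
  have vw_ne: "v \<noteq> w" using min1 by auto
  have wu_ne: "w \<noteq> u" using wuD tournD(2)[OF Suc.prems(1)] by auto
  from Suc.IH[OF t1 F1 vw1[unfolded R1_def] min1[unfolded R1_def]]
  obtain D2 where D2: "tourn V D2" "F \<subseteq> D2" "outd D2 v = outd D1 v - 1"
    "outd D2 w = Suc (outd D1 w)" "\<forall>x. x \<noteq> v \<longrightarrow> x \<noteq> w \<longrightarrow> outd D2 x = outd D1 x"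
    by blast
  have o1: "outd D1 w = outd D w - 1" "outd D1 u = Suc (outd D u)"
    "\<And>x. x \<noteq> w \<Longrightarrow> x \<noteq> u \<Longrightarrow> outd D1 x = outd D x" "outd D w \<ge> 1"
    using outd_flip[OF finV Suc.prems(1) wuD] unfolding D1_def by auto
  show ?case
  proof (intro exI conjI allI impI)
    show "tourn V D2" "F \<subseteq> D2" using D2 by auto
    show "outd D2 v = outd D v - 1" using D2(3) o1(3)[of v] vu vw_ne by simp
    show "outd D2 u = Suc (outd D u)" using D2(5) o1(2) vu wu_ne by simp
    fix x assume "x \<noteq> v" "x \<noteq> u"
    then show "outd D2 x = outd D x" using D2(4,5) o1 by (cases "x = w") auto
  qed
qed

lemma card_offdiag:
  assumes "finite S"
  shows "card {p \<in> S \<times> S. fst p \<noteq> snd p} = card S * (card S - 1)"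
proof -
  have eq: "S \<times> S = {p \<in> S \<times> S. fst p \<noteq> snd p} \<union> (\<lambda>x. (x,x)) ` S" by auto
  have "card ((\<lambda>x. (x,x)) ` S) = card S" by (rule card_image) (auto simp: inj_on_def)
  moreover have "card (S \<times> S) = card {p \<in> S \<times> S. fst p \<noteq> snd p} + card ((\<lambda>x. (x,x)) ` S)"
    by (subst eq, rule card_Un_disjoint) (use assms in auto)
  ultimately have "card S * card S = card {p \<in> S \<times> S. fst p \<noteq> snd p} + card S"
    by (simp add: card_cartesian_product)
  then show ?thesis by (simp add: diff_mult_distrib2)
qed

lemma antisym_card:
  assumes "finite S" "Q \<subseteq> S \<times> S" "\<And>x y. (x,y) \<in> Q \<Longrightarrow> (y,x) \<notin> Q"
  shows "2 * card Q \<le> card S * (card S - 1)"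
proof -
  have fQ: "finite Q" using assms(1,2) finite_subset by blast
  have irr: "\<And>x. (x,x) \<notin> Q" using assms(3) by blast
  have sub: "Q \<union> Q\<inverse> \<subseteq> {p \<in> S \<times> S. fst p \<noteq> snd p}" using assms(2) irr by auto
  have dis: "Q \<inter> Q\<inverse> = {}" using assms(3) by auto
  have fO: "finite {p \<in> S \<times> S. fst p \<noteq> snd p}" using assms(1) by simp
  have "card (Q \<union> Q\<inverse>) = card Q + card (Q\<inverse>)"
    by (rule card_Un_disjoint) (use fQ dis in auto)
  moreover have "card (Q \<union> Q\<inverse>) \<le> card {p \<in> S \<times> S. fst p \<noteq> snd p}"
    by (rule card_mono[OF fO sub])
  ultimately have "card Q + card (Q\<inverse>) \<le> card {p \<in> S \<times> S. fst p \<noteq> snd p}" by simp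
  then show ?thesis using card_offdiag[OF assms(1)] by simp
qed

lemma tourn_card:
  assumes "finite V" "tourn V D"
  shows "2 * card D = card V * (card V - 1)"
proof -
  have fD: "finite D" using finite_tourn[OF assms] .
  have "D \<union> D\<inverse> = {p \<in> V \<times> V. fst p \<noteq> snd p}"
  proof (intro equalityI subsetI)
    fix p assume "p \<in> D \<union> D\<inverse>"
    then show "p \<in> {p \<in> V \<times> V. fst p \<noteq> snd p}"
      using tournD(1,2)[OF assms(2)] by (cases p) auto
  next
    fix p assume p: "p \<in> {p \<in> V \<times> V. fst p \<noteq> snd p}"
    obtain a b where pab: "p = (a,b)" by (cases p)
    have "a \<in> V" "b \<in> V" "a \<noteq> b" using p pab by auto
    then have "(a,b) \<in> D \<or> (b,a) \<in> D" using tournD(4)[OF assms(2)] by blast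
    then show "p \<in> D \<union> D\<inverse>" using pab by auto
  qed
  moreover have "D \<inter> D\<inverse> = {}" using tournD(3)[OF assms(2)] by auto
  ultimately have "card D + card (D\<inverse>) = card {p \<in> V \<times> V. fst p \<noteq> snd p}"
    using card_Un_disjoint[of D "D\<inverse>"] fD by simp
  then show ?thesis using card_offdiag[OF assms(1)] by simp
qed

lemma sum_outd:
  assumes "finite V" "D \<subseteq> V \<times> V" "S \<subseteq> V"
  shows "sum (outd D) S = card (D \<inter> (S \<times> V))"
proof -
  have fS: "finite S" using assms finite_subset by blast
  have eq: "D \<inter> (S \<times> V) = Sigma S (\<lambda>x. {y. (x,y) \<in> D})" using assms(2) by auto
  have "\<forall>x\<in>S. finite {y. (x,y) \<in> D}"
  proof
    fix x have "{y. (x,y) \<in> D} \<subseteq> V" using assms(2) by auto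
    then show "finite {y. (x,y) \<in> D}" using assms(1) finite_subset by blast
  qed
  then show ?thesis unfolding eq outd_def using fS by simp
qed

lemma init_tourn:
  assumes "finite V" "F \<subseteq> V \<times> V" "\<And>x y. (x,y) \<in> F \<Longrightarrow> (y,x) \<notin> F"
  shows "\<exists>D. tourn V D \<and> F \<subseteq> D"
proof -
  obtain f :: "'a \<Rightarrow> nat" and n where f: "inj_on f V" using finite_imp_inj_to_nat_seg[OF assms(1)] by blast
  define D where "D = F \<union> {(x,y). x \<in> V \<and> y \<in> V \<and> (y,x) \<notin> F \<and> f x < f y}"
  have "tourn V D" unfolding tourn_def
  proof (intro conjI allI impI ballI)
    show "D \<subseteq> V \<times> V" unfolding D_def using assms(2) by auto
  next
    fix x y assume "(x,y) \<in> D" then show "(y,x) \<notin> D" unfolding D_def using assms(3) by auto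
  next
    fix x y assume xy: "x \<in> V" "y \<in> V" "x \<noteq> y"
    then have "f x \<noteq> f y" using f inj_on_def by metis
    then show "(x,y) \<in> D \<or> (y,x) \<in> D" unfolding D_def using xy by auto
  qed
  then show ?thesis unfolding D_def by blast
qed

theorem hakimi:
  fixes d :: "'a \<Rightarrow> nat"
  assumes finV: "finite V" and FV: "F \<subseteq> V \<times> V" and Fanti: "\<And>x y. (x,y) \<in> F \<Longrightarrow> (y,x) \<notin> F"
    and sumd: "2 * sum d V = card V * (card V - 1)"
    and cond: "\<And>S. S \<subseteq> V \<Longrightarrow> card S * (card S - 1) + 2 * card (F \<inter> (S \<times> (V - S))) \<le> 2 * sum d S"
  shows "\<exists>D. tourn V D \<and> F \<subseteq> D \<and> (\<forall>x\<in>V. outd D x = d x)"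
proof -
  define P where "P D \<longleftrightarrow> tourn V D \<and> F \<subseteq> D" for D
  define mu where "mu D = (\<Sum>x\<in>V. outd D x - d x)" for D
  obtain D0 where "P D0" using init_tourn[OF finV FV Fanti] unfolding P_def by blast
  from ex_has_least_nat[of P D0 mu, OF this]
  obtain D where PD: "P D" and Dmin: "\<And>D'. P D' \<Longrightarrow> mu D \<le> mu D'" by blast
  have tD: "tourn V D" and FD: "F \<subseteq> D" using PD unfolding P_def by auto
  have DV: "D \<subseteq> V \<times> V" using tournD(1)[OF tD] .
  have le: "\<forall>x\<in>V. outd D x \<le> d x"
  proof (rule ccontr)
    assume "\<not> (\<forall>x\<in>V. outd D x \<le> d x)"
    then obtain v where vV: "v \<in> V" and vbig: "d v < outd D v" by auto
    define R where "R = D - F"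
    define S where "S = {u. (v,u) \<in> R\<^sup>*}"
    have RV: "R \<subseteq> V \<times> V" unfolding R_def using DV by blast
    have SV: "S \<subseteq> V"
    proof
      fix u assume "u \<in> S"
      then have "(v,u) \<in> R\<^sup>*" unfolding S_def by simp
      then show "u \<in> V"
        by (induction rule: rtrancl_induct) (use vV RV in auto)
    qed
    have vS: "v \<in> S" unfolding S_def by simp
    have fS: "finite S" using SV finV finite_subset by blast
    show False
    proof (cases "\<exists>u\<in>S. outd D u < d u")
      case True
      then obtain u where uS: "u \<in> S" and usmall: "outd D u < d u" by blast
      have uv: "u \<noteq> v" using usmall vbig by auto
      from uS obtain n where "(v,u) \<in> R ^^ n" unfolding S_def using rtrancl_power by blast
      define n0 where "n0 = (LEAST n. (v,u) \<in> R ^^ n)"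
      have n0: "(v,u) \<in> R ^^ n0" unfolding n0_def by (rule LeastI) fact
      have n0min: "\<forall>i<n0. (v,u) \<notin> R ^^ i" unfolding n0_def using not_less_Least by blast
      have "n0 \<noteq> 0" using n0 uv by (cases n0) auto
      then obtain n' where n': "n0 = Suc n'" using not0_implies_Suc by blast
      from path_flip[OF finV tD FD n0[unfolded n' R_def] n0min[unfolded n' R_def]]
      obtain D' where D': "tourn V D'" "F \<subseteq> D'" "outd D' v = outd D v - 1"
        "outd D' u = Suc (outd D u)" "\<forall>x. x \<noteq> v \<longrightarrow> x \<noteq> u \<longrightarrow> outd D' x = outd D x" by blast
      have "mu D' < mu D" unfolding mu_def
      proof (rule sum_strict_mono_ex1[OF finV])
        show "\<forall>x\<in>V. outd D' x - d x \<le> outd D x - d x"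
        proof
          fix x assume "x \<in> V"
          show "outd D' x - d x \<le> outd D x - d x"
          proof (cases "x = v")
            case True then show ?thesis using D'(3) by simp
          next
            case False
            show ?thesis
            proof (cases "x = u")
              case True then show ?thesis using D'(4) usmall by simp
            next
              case False2: False
              then show ?thesis using D'(5) False by simp
            qed
          qed
        qed
        show "\<exists>a\<in>V. outd D' a - d a < outd D a - d a"
          using vV D'(3) vbig by (intro bexI[of _ v]) auto
      qed
      moreover have "P D'" unfolding P_def using D' by auto
      ultimately show False using Dmin[of D'] by simp
    next
      case False
      then have ge: "\<forall>u\<in>S. d u \<le> outd D u" by auto
      have lt: "sum d S < sum (outd D) S"
        using sum_strict_mono_ex1[OF fS ge] vS vbig by blast
      have so: "sum (outd D) S = card (D \<inter> (S \<times> V))" using sum_outd[OF finV DV SV] .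
      have split: "D \<inter> (S \<times> V) = (D \<inter> (S \<times> S)) \<union> (D \<inter> (S \<times> (V - S)))" using SV by blast
      have fin1: "finite (D \<inter> (S \<times> S))" "finite (D \<inter> (S \<times> (V - S)))"
        using finite_tourn[OF finV tD] by auto
      have c1: "card (D \<inter> (S \<times> V)) = card (D \<inter> (S \<times> S)) + card (D \<inter> (S \<times> (V - S)))"
        unfolding split by (rule card_Un_disjoint[OF fin1]) blast
      have c2: "2 * card (D \<inter> (S \<times> S)) \<le> card S * (card S - 1)"
        by (rule antisym_card[OF fS]) (use tournD(3)[OF tD] in auto)
      have sub3: "D \<inter> (S \<times> (V - S)) \<subseteq> F \<inter> (S \<times> (V - S))"
      proof
        fix p assume p: "p \<in> D \<inter> (S \<times> (V - S))"
        obtain x y where pxy: "p = (x,y)" by (cases p)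
        show "p \<in> F \<inter> (S \<times> (V - S))"
        proof (rule ccontr)
          assume "p \<notin> F \<inter> (S \<times> (V - S))"
          then have "(x,y) \<in> R" using p pxy unfolding R_def by auto
          moreover have "(v,x) \<in> R\<^sup>*" using p pxy unfolding S_def by auto
          ultimately have "(v,y) \<in> R\<^sup>*" by auto
          then have "y \<in> S" unfolding S_def by simp
          then show False using p pxy by auto
        qed
      qed
      have c3: "card (D \<inter> (S \<times> (V - S))) \<le> card (F \<inter> (S \<times> (V - S)))"
        by (rule card_mono[OF _ sub3]) (use finV FV finite_subset in blast)
      have "2 * sum (outd D) S \<le> card S * (card S - 1) + 2 * card (F \<inter> (S \<times> (V - S)))"
        using so c1 c2 c3 by linarith
      also have "\<dots> \<le> 2 * sum d S" using cond[OF SV] .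
      finally show False using lt by linarith
    qed
  qed
  have "2 * sum (outd D) V = card V * (card V - 1)"
  proof -
    have "D \<inter> (V \<times> V) = D" using DV by blast
    then show ?thesis using sum_outd[OF finV DV order_refl] tourn_card[OF finV tD] by simp
  qed
  then have eqsum: "sum (outd D) V = sum d V" using sumd by linarith
  have "\<forall>x\<in>V. outd D x = d x"
  proof (rule ccontr)
    assume "\<not> (\<forall>x\<in>V. outd D x = d x)"
    then obtain x where "x \<in> V" "outd D x < d x" using le by fastforce
    then have "sum (outd D) V < sum d V" using sum_strict_mono_ex1[OF finV le] by blast
    then show False using eqsum by simp
  qed
  then show ?thesis using tD FD by blast
qed

lemma partition_k:
  assumes "finite X" "card X = j * k"
  shows "\<exists>P. (\<forall>Y\<in>P. Y \<subseteq> X \<and> card Y = k) \<and> (\<forall>Y\<in>P. \<forall>Z\<in>P. Y \<noteq> Z \<longrightarrow> Y \<inter> Z = {}) \<and> \<Union>P = X"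
  using assms
proof (induction j arbitrary: X)
  case 0
  then have "X = {}" by simp
  then show ?case by (intro exI[of _ "{}"]) auto
next
  case (Suc j)
  have "k \<le> card X" using Suc.prems(2) by simp
  then obtain Y0 where Y0: "Y0 \<subseteq> X" "card Y0 = k" "finite Y0" by (rule obtain_subset_with_card_n)
  have "card (X - Y0) = card X - card Y0" using card_Diff_subset[OF Y0(3) Y0(1)] .
  then have c: "card (X - Y0) = j * k" using Suc.prems(2) Y0(2) by simp
  have f: "finite (X - Y0)" using Suc.prems(1) by simp
  obtain P where P: "(\<forall>Y\<in>P. Y \<subseteq> X - Y0 \<and> card Y = k) \<and> (\<forall>Y\<in>P. \<forall>Z\<in>P. Y \<noteq> Z \<longrightarrow> Y \<inter> Z = {}) \<and> \<Union>P = X - Y0"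
    using Suc.IH[OF f c] by (elim exE) (rule that)
  have P1: "\<And>Y. Y \<in> P \<Longrightarrow> Y \<subseteq> X - Y0 \<and> card Y = k" using P by blast
  have P2: "\<And>Y Z. Y \<in> P \<Longrightarrow> Z \<in> P \<Longrightarrow> Y \<noteq> Z \<Longrightarrow> Y \<inter> Z = {}" using P by blast
  have P3: "\<Union>P = X - Y0" using P by blast
  have Q1: "\<forall>Z\<in>insert Y0 P. Z \<subseteq> X \<and> card Z = k" using P1 Y0 by auto
  have Q2: "\<forall>Z1\<in>insert Y0 P. \<forall>Z2\<in>insert Y0 P. Z1 \<noteq> Z2 \<longrightarrow> Z1 \<inter> Z2 = {}"
  proof (intro ballI impI)
    fix Z1 Z2 assume Z: "Z1 \<in> insert Y0 P" "Z2 \<in> insert Y0 P" "Z1 \<noteq> Z2"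
    show "Z1 \<inter> Z2 = {}"
    proof (cases "Z1 = Y0")
      case True
      then have "Z2 \<in> P" using Z by auto
      then show ?thesis using P1 True by blast
    next
      case False
      then have Z1P: "Z1 \<in> P" using Z by auto
      show ?thesis
      proof (cases "Z2 = Y0")
        case True
        then show ?thesis using P1[OF Z1P] by blast
      next
        case False
        then have "Z2 \<in> P" using Z by auto
        then show ?thesis using P2 Z1P Z(3) by blast
      qed
    qed
  qed
  have Q3: "\<Union> (insert Y0 P) = X" using P3 Y0 by auto
  show ?case using Q1 Q2 Q3 by (intro exI[of _ "insert Y0 P"]) simp
qed

definition arcs :: "('a \<times> 'a set) set \<Rightarrow> ('a \<times> 'a) set" where
  "arcs A = (\<Union>S\<in>A. {fst S} \<times> snd S)"

lemma arcs_iff: "(x,y) \<in> arcs A \<longleftrightarrow> (\<exists>S\<in>A. fst S = x \<and> y \<in> snd S)"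
  unfolding arcs_def by auto

lemma psd_star: "partial_star_design k V A \<Longrightarrow> S \<in> A \<Longrightarrow> fst S \<in> V \<and> snd S \<subseteq> V - {fst S} \<and> finite (snd S) \<and> card (snd S) = k"
  unfolding partial_star_design_def is_star_def by blast

lemma psd_disj:
  assumes "partial_star_design k V A" "S \<in> A" "T \<in> A" "y \<in> snd S" "z \<in> snd T"
    "{fst S, y} = {fst T, z}"
  shows "S = T"
proof (rule ccontr)
  assume "S \<noteq> T"
  then have "star_edges S \<inter> star_edges T = {}" using assms(1-3) unfolding partial_star_design_def by blast
  moreover have "{fst S, y} \<in> star_edges S" using assms(4) unfolding star_edges_def by auto
  moreover have "{fst T, z} \<in> star_edges T" using assms(5) unfolding star_edges_def by auto
  ultimately show False using assms(6) by auto
qed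

lemma arcs_V: "partial_star_design k V A \<Longrightarrow> arcs A \<subseteq> V \<times> V"
proof
  fix p assume psd: "partial_star_design k V A" and p: "p \<in> arcs A"
  obtain x y where pxy: "p = (x,y)" by (cases p)
  have "(x,y) \<in> arcs A" using p pxy by simp
  then obtain S where S: "S \<in> A" "fst S = x" "y \<in> snd S" unfolding arcs_iff by blast
  have "fst S \<in> V" "snd S \<subseteq> V - {fst S}" using psd_star[OF psd S(1)] by auto
  then show "p \<in> V \<times> V" using S pxy by auto
qed

lemma arcs_irr: "partial_star_design k V A \<Longrightarrow> (x,y) \<in> arcs A \<Longrightarrow> x \<noteq> y"
proof -
  assume psd: "partial_star_design k V A" and p: "(x,y) \<in> arcs A"
  then obtain S where S: "S \<in> A" "fst S = x" "y \<in> snd S" unfolding arcs_iff by blast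
  have "snd S \<subseteq> V - {fst S}" using psd_star[OF psd S(1)] by auto
  then show "x \<noteq> y" using S by auto
qed

lemma arcs_anti:
  assumes "partial_star_design k V A" "(x,y) \<in> arcs A"
  shows "(y,x) \<notin> arcs A"
proof
  assume "(y,x) \<in> arcs A"
  then obtain T where T: "T \<in> A" "fst T = y" "x \<in> snd T" unfolding arcs_iff by blast
  from assms(2) obtain S where S: "S \<in> A" "fst S = x" "y \<in> snd S" unfolding arcs_iff by blast
  have "{fst S, y} = {fst T, x}" using S T by auto
  then have "S = T" using psd_disj[OF assms(1) S(1) T(1) S(3) T(3)] by blast
  then show False using S T arcs_irr[OF assms] by auto
qed

lemma out_arcs_card:
  assumes "partial_star_design k V A" "finite A"
  shows "card {y. (x,y) \<in> arcs A} = k * card {S\<in>A. fst S = x}"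
proof -
  have eq: "{y. (x,y) \<in> arcs A} = (\<Union>S\<in>{S\<in>A. fst S = x}. snd S)" unfolding arcs_iff by auto
  have "card (\<Union>S\<in>{S\<in>A. fst S = x}. snd S) = (\<Sum>S\<in>{S\<in>A. fst S = x}. card (snd S))"
  proof (rule card_UN_disjoint)
    show "finite {S \<in> A. fst S = x}" using assms(2) by simp
    show "\<forall>S\<in>{S \<in> A. fst S = x}. finite (snd S)" using psd_star[OF assms(1)] by blast
    show "\<forall>S\<in>{S \<in> A. fst S = x}. \<forall>T\<in>{S \<in> A. fst S = x}. S \<noteq> T \<longrightarrow> snd S \<inter> snd T = {}"
    proof (intro ballI impI)
      fix S T assume S: "S \<in> {S \<in> A. fst S = x}" and T: "T \<in> {S \<in> A. fst S = x}" and ST: "S \<noteq> T"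
      show "snd S \<inter> snd T = {}"
      proof (rule ccontr)
        assume "snd S \<inter> snd T \<noteq> {}"
        then obtain y where "y \<in> snd S" "y \<in> snd T" by blast
        moreover have "{fst S, y} = {fst T, y}" using S T by auto
        ultimately have "S = T" using psd_disj[OF assms(1)] S T by blast
        then show False using ST by simp
      qed
    qed
  qed
  also have "\<dots> = (\<Sum>S\<in>{S\<in>A. fst S = x}. k)" using psd_star[OF assms(1)] by (intro sum.cong) auto
  finally show ?thesis using eq by simp
qed

lemma in_arcs_card:
  assumes "partial_star_design k V A" "finite A"
  shows "card {x. (x,y) \<in> arcs A} \<le> card {S\<in>A. y \<in> snd S}"
    and "card {S\<in>A. y \<in> snd S} \<le> card A - card {S\<in>A. fst S = y}"
proof -
  have "{x. (x,y) \<in> arcs A} = fst ` {S\<in>A. y \<in> snd S}" unfolding arcs_iff by auto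
  then show "card {x. (x,y) \<in> arcs A} \<le> card {S\<in>A. y \<in> snd S}"
    using card_image_le[of "{S\<in>A. y \<in> snd S}" fst] assms(2) by simp
  have "{S\<in>A. y \<in> snd S} \<subseteq> A - {S\<in>A. fst S = y}"
  proof
    fix S assume S: "S \<in> {S\<in>A. y \<in> snd S}"
    then have "snd S \<subseteq> V - {fst S}" using psd_star[OF assms(1)] by blast
    then show "S \<in> A - {S\<in>A. fst S = y}" using S by auto
  qed
  then have "card {S\<in>A. y \<in> snd S} \<le> card (A - {S\<in>A. fst S = y})"
    using assms(2) by (intro card_mono) auto
  also have "\<dots> = card A - card {S\<in>A. fst S = y}" using assms(2) by (intro card_Diff_subset) auto
  finally show "card {S\<in>A. y \<in> snd S} \<le> card A - card {S\<in>A. fst S = y}" .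
qed

lemma arcs_card:
  assumes "partial_star_design k V A" "finite A"
  shows "card (arcs A) \<le> k * card A"
proof -
  have "card (arcs A) \<le> (\<Sum>S\<in>A. card ({fst S} \<times> snd S))"
    unfolding arcs_def by (rule card_UN_le[OF assms(2)])
  also have "\<dots> = (\<Sum>S\<in>A. k)" using psd_star[OF assms(1)]
    by (intro sum.cong) (auto simp: card_cartesian_product)
  finally show ?thesis by (simp add: mult.commute)
qed

lemma sum_in:
  assumes "finite V" "F \<subseteq> V \<times> V" "T \<subseteq> V"
  shows "(\<Sum>y\<in>T. card {x. (x,y) \<in> F}) = card (F \<inter> (V \<times> T))"
proof -
  have "F\<inverse> \<subseteq> V \<times> V" using assms(2) by auto
  from sum_outd[OF assms(1) this assms(3)]
  have "sum (outd (F\<inverse>)) T = card (F\<inverse> \<inter> T \<times> V)" .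
  moreover have "F\<inverse> \<inter> T \<times> V = (F \<inter> (V \<times> T))\<inverse>" by auto
  moreover have "outd (F\<inverse>) y = card {x. (x,y) \<in> F}" for y unfolding outd_def by simp
  ultimately show ?thesis by simp
qed

lemma complete_from_tourn:
  assumes psd: "partial_star_design k V A" and kpos: "k > 0"
    and tD: "tourn V D" and AD: "arcs A \<subseteq> D"
    and mult: "\<forall>x\<in>V. \<exists>j. card {y. (x,y) \<in> D - arcs A} = j * k"
  shows "completable k V A"
proof -
  have finV: "finite V" using psd unfolding partial_star_design_def by blast
  have DV: "D \<subseteq> V \<times> V" using tournD(1)[OF tD] .
  define X where "X x = {y. (x,y) \<in> D - arcs A}" for x
  have XV: "X x \<subseteq> V - {x}" for x
    unfolding X_def using DV tournD(2)[OF tD] by auto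
  have finX: "finite (X x)" for x using XV finV finite_subset by blast
  have "\<forall>x\<in>V. \<exists>P. (\<forall>Y\<in>P. Y \<subseteq> X x \<and> card Y = k) \<and> (\<forall>Y\<in>P. \<forall>Z\<in>P. Y \<noteq> Z \<longrightarrow> Y \<inter> Z = {}) \<and> \<Union>P = X x"
  proof
    fix x assume "x \<in> V"
    then obtain j where "card (X x) = j * k" using mult unfolding X_def by blast
    then show "\<exists>P. (\<forall>Y\<in>P. Y \<subseteq> X x \<and> card Y = k) \<and> (\<forall>Y\<in>P. \<forall>Z\<in>P. Y \<noteq> Z \<longrightarrow> Y \<inter> Z = {}) \<and> \<Union>P = X x"
      by (rule partition_k[OF finX])
  qed
  from bchoice[OF this] obtain Pf where Pf: "\<forall>x\<in>V. (\<forall>Y\<in>Pf x. Y \<subseteq> X x \<and> card Y = k) \<and> (\<forall>Y\<in>Pf x. \<forall>Z\<in>Pf x. Y \<noteq> Z \<longrightarrow> Y \<inter> Z = {}) \<and> \<Union>(Pf x) = X x"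
    by (elim exE) (rule that)
  have Pf1: "\<And>x Y. x \<in> V \<Longrightarrow> Y \<in> Pf x \<Longrightarrow> Y \<subseteq> X x \<and> card Y = k" using Pf by blast
  have Pf2: "\<And>x Y Z. x \<in> V \<Longrightarrow> Y \<in> Pf x \<Longrightarrow> Z \<in> Pf x \<Longrightarrow> Y \<noteq> Z \<Longrightarrow> Y \<inter> Z = {}" using Pf by blast
  have Pf3: "\<And>x. x \<in> V \<Longrightarrow> \<Union>(Pf x) = X x" using Pf by blast
  define N where "N = Sigma V Pf"
  define B where "B = A \<union> N"
  have edgeA: "\<And>S e. S \<in> A \<Longrightarrow> e \<in> star_edges S \<Longrightarrow> \<exists>a b. e = {a,b} \<and> (a,b) \<in> arcs A"
    unfolding star_edges_def arcs_iff by blast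
  have edgeN: "\<And>S e. S \<in> N \<Longrightarrow> e \<in> star_edges S \<Longrightarrow> \<exists>a b. e = {a,b} \<and> (a,b) \<in> D - arcs A"
  proof -
    fix S e assume S: "S \<in> N" and e: "e \<in> star_edges S"
    obtain x Y where SxY: "S = (x,Y)" "x \<in> V" "Y \<in> Pf x" using S unfolding N_def by blast
    obtain z where z: "z \<in> Y" "e = {x,z}" using e SxY unfolding star_edges_def by auto
    have "z \<in> X x" using Pf1[OF SxY(2,3)] z(1) by blast
    then show "\<exists>a b. e = {a,b} \<and> (a,b) \<in> D - arcs A" using z(2) unfolding X_def by blast
  qed
  have AN: "star_edges S \<inter> star_edges T = {}" if S: "S \<in> A" and T: "T \<in> N" for S T
  proof (rule ccontr)
    assume "star_edges S \<inter> star_edges T \<noteq> {}"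
    then obtain e where e1: "e \<in> star_edges S" and e2: "e \<in> star_edges T" by blast
    obtain a b where ab: "e = {a,b}" "(a,b) \<in> arcs A" using edgeA[OF S e1] by blast
    obtain c d where cd: "e = {c,d}" "(c,d) \<in> D - arcs A" using edgeN[OF T e2] by blast
    have "(a = c \<and> b = d) \<or> (a = d \<and> b = c)" using ab(1) cd(1) by (auto simp: doubleton_eq_iff)
    then show False
    proof
      assume "a = c \<and> b = d" then show False using ab cd by auto
    next
      assume "a = d \<and> b = c"
      then have "(d,c) \<in> D" "(c,d) \<in> D" using ab(2) AD cd(2) by auto
      then show False using tournD(3)[OF tD] by blast
    qed
  qed
  have NN: "star_edges S \<inter> star_edges T = {}" if S: "S \<in> N" and T: "T \<in> N" and ST: "S \<noteq> T" for S T
  proof (rule ccontr)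
    assume "star_edges S \<inter> star_edges T \<noteq> {}"
    then obtain e where e1: "e \<in> star_edges S" and e2: "e \<in> star_edges T" by blast
    obtain x Y where SxY: "S = (x,Y)" "x \<in> V" "Y \<in> Pf x" using S unfolding N_def by blast
    obtain x' Y' where TxY: "T = (x',Y')" "x' \<in> V" "Y' \<in> Pf x'" using T unfolding N_def by blast
    obtain z where z: "z \<in> Y" "e = {x,z}" using e1 SxY unfolding star_edges_def by auto
    obtain z' where z': "z' \<in> Y'" "e = {x',z'}" using e2 TxY unfolding star_edges_def by auto
    have zX: "z \<in> X x" using Pf1[OF SxY(2,3)] z(1) by blast
    have zX': "z' \<in> X x'" using Pf1[OF TxY(2,3)] z'(1) by blast
    have "(x = x' \<and> z = z') \<or> (x = z' \<and> z = x')" using z(2) z'(2) by (auto simp: doubleton_eq_iff)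
    then show False
    proof
      assume eq: "x = x' \<and> z = z'"
      then have "Y' \<in> Pf x" using TxY by simp
      moreover have "z \<in> Y \<inter> Y'" using z(1) z'(1) eq by simp
      ultimately have "Y = Y'" using Pf2[OF SxY(2,3)] by blast
      then show False using ST SxY TxY eq by simp
    next
      assume eq: "x = z' \<and> z = x'"
      then have "(x,z) \<in> D" "(z,x) \<in> D" using zX zX' unfolding X_def by auto
      then show False using tournD(3)[OF tD] by blast
    qed
  qed
  have psdB: "partial_star_design k V B"
    unfolding partial_star_design_def
  proof (intro conjI ballI impI)
    show "finite V" by (rule finV)
  next
    fix S assume "S \<in> B"
    then show "is_star k V S"
    proof (cases "S \<in> A")
      case True then show ?thesis using psd unfolding partial_star_design_def by blast
    next
      case False
      then have "S \<in> N" using \<open>S \<in> B\<close> unfolding B_def by blast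
      then obtain x Y where SxY: "S = (x,Y)" "x \<in> V" "Y \<in> Pf x" unfolding N_def by blast
      have "Y \<subseteq> V - {x}" "card Y = k" using Pf1[OF SxY(2,3)] XV by blast+
      moreover have "finite Y" using \<open>Y \<subseteq> V - {x}\<close> finV finite_subset by blast
      ultimately show ?thesis unfolding is_star_def using SxY by simp
    qed
  next
    fix S T assume S: "S \<in> B" and T: "T \<in> B" and ST: "S \<noteq> T"
    show "star_edges S \<inter> star_edges T = {}"
    proof (cases "S \<in> A")
      case SA: True
      show ?thesis
      proof (cases "T \<in> A")
        case True then show ?thesis using psd SA ST unfolding partial_star_design_def by blast
      next
        case False then have "T \<in> N" using T unfolding B_def by blast
        then show ?thesis using AN[OF SA] by blast
      qed
    next
      case SN: False
      then have SN': "S \<in> N" using S unfolding B_def by blast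
      show ?thesis
      proof (cases "T \<in> A")
        case True then show ?thesis using AN[OF True SN'] by blast
      next
        case False then have "T \<in> N" using T unfolding B_def by blast
        then show ?thesis using NN[OF SN' _ ST] by blast
      qed
    qed
  qed
  have cover: "\<Union> (star_edges ` B) = complete_edges V"
  proof (intro equalityI subsetI)
    fix e assume "e \<in> \<Union> (star_edges ` B)"
    then obtain S where S: "S \<in> B" "e \<in> star_edges S" by blast
    have "is_star k V S" using psdB S(1) unfolding partial_star_design_def by blast
    then have "fst S \<in> V" "snd S \<subseteq> V - {fst S}" unfolding is_star_def by auto
    then show "e \<in> complete_edges V" using S(2) unfolding star_edges_def complete_edges_def by blast
  next
    fix e assume "e \<in> complete_edges V"
    then obtain x y where xy: "x \<in> V" "y \<in> V" "x \<noteq> y" "e = {x,y}" unfolding complete_edges_def by blast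
    have cov: "{a,b} \<in> \<Union> (star_edges ` B)" if ab: "(a,b) \<in> D" for a b
    proof (cases "(a,b) \<in> arcs A")
      case True
      then obtain S where "S \<in> A" "fst S = a" "b \<in> snd S" unfolding arcs_iff by blast
      then show ?thesis unfolding B_def star_edges_def by blast
    next
      case False
      have aV: "a \<in> V" using ab DV by blast
      have "b \<in> X a" using ab False unfolding X_def by blast
      then obtain Y where Y: "Y \<in> Pf a" "b \<in> Y" using Pf3[OF aV] by blast
      then have "(a,Y) \<in> B" unfolding B_def N_def using aV by blast
      moreover have "{a,b} \<in> star_edges (a,Y)" unfolding star_edges_def using Y(2) by auto
      ultimately show ?thesis by blast
    qed
    have "(x,y) \<in> D \<or> (y,x) \<in> D" using tournD(4)[OF tD xy(1-3)] by blast
    then show "e \<in> \<Union> (star_edges ` B)"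
    proof
      assume "(x,y) \<in> D" then show ?thesis using cov xy(4) by blast
    next
      assume "(y,x) \<in> D" then have "{y,x} \<in> \<Union> (star_edges ` B)" using cov by blast
      then show ?thesis using xy(4) by (simp add: insert_commute)
    qed
  qed
  show ?thesis unfolding completable_def using psdB cover unfolding B_def by blast
qed

lemma arith2: "(s::nat) \<le> 2*k+1 \<Longrightarrow> s*(s-1) \<le> 2*k*s"
proof -
  assume "s \<le> 2*k+1"
  then have "s - 1 \<le> 2*k" by simp
  then have "s*(s-1) \<le> s*(2*k)" by (rule mult_le_mono2)
  then show ?thesis by (simp add: mult.commute)
qed
lemma arith1:
  fixes s k f :: nat
  assumes "s \<ge> 1" "s \<le> 2*k+1" "f \<le> 2*k" "f + s \<le> 3*k+1"
  shows "s*(s-1) + 2*f \<le> 4*k + 2*k*(s-1)"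
proof (cases "s \<le> 2*k")
  case True
  then have "s*(s-1) \<le> 2*k*(s-1)" by (simp add: mult_le_mono1)
  then show ?thesis using assms(3) by linarith
next
  case False
  then have s: "s = 2*k+1" using assms(2) by simp
  then have "f \<le> k" using assms(4) by simp
  then show ?thesis using s by (simp add: algebra_simps)
qed
lemma arith3i:
  fixes s k t :: int
  assumes "t \<ge> 1" "s + t = 3*k+1" "s \<ge> 2*k+2" "k \<ge> 3"
  shows "s*(s-1) + 2*(t*(2*k+2)+1) \<le> (3*k+1)*(3*k)"
proof -
  have s: "s = 3*k+1-t" using assms(2) by simp
  have tk: "t \<le> k - 1" using assms by simp
  have p: "t*(2*k-3-t) \<ge> 2"
  proof (cases "t = 1")
    case True then show ?thesis using assms(4) by simp
  next
    case False
    then have "t \<ge> 2" using assms(1) by simp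
    moreover have "2*k-3-t \<ge> 1" using tk assms(4) by simp
    ultimately have "t*(2*k-3-t) \<ge> 2*1" by (intro mult_mono) auto
    then show ?thesis by simp
  qed
  have "s*(s-1) + 2*(t*(2*k+2)+1) = (3*k+1)*(3*k) - (t*(2*k-3-t) - 2)"
    unfolding s by (simp add: algebra_simps)
  then show ?thesis using p by simp
qed
lemma arith3:
  fixes s k t :: nat
  assumes "t \<ge> 1" "s + t = 3*k+1" "s \<ge> 2*k+2" "k \<ge> 3"
  shows "s*(s-1) + 2*(t*(2*k+2)+1) \<le> (3*k+1)*(3*k)"
proof -
  have "int s * (int s - 1) + 2*(int t*(2*int k+2)+1) \<le> (3*int k+1)*(3*int k)"
    by (rule arith3i) (use assms in auto)
  moreover have s1: "int (s - 1) = int s - 1" using assms(3) by simp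
  moreover have "int (s*(s-1) + 2*(t*(2*k+2)+1)) = int s * (int s - 1) + 2*(int t*(2*int k+2)+1)"
  proof -
    have e1: "int (s*(s-1)) = int s * (int s - 1)" by (simp only: of_nat_mult s1)
    have e2: "int (2*(t*(2*k+2)+1)) = 2*(int t*(2*int k+2)+1)" by (simp add: algebra_simps)
    show ?thesis by (simp only: of_nat_add e1 e2)
  qed
  moreover have "int ((3*k+1)*(3*k)) = (3*int k+1)*(3*int k)" by (simp add: algebra_simps)
  ultimately have "int (s*(s-1) + 2*(t*(2*k+2)+1)) \<le> int ((3*k+1)*(3*k))" by linarith
  then show ?thesis by (simp only: of_nat_le_iff)
qed

theorem lemma11:
  fixes k :: nat and V :: "'a set" and A :: "('a \<times> 'a set) set"
  assumes "odd k" and "k \<ge> 3"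
    and "finite V" and "card V = 3 * k + 1"
    and "partial_star_design k V A"
    and "card A = 4"
    and "\<not> reducible k V A"
  shows "completable k V A"
proof -
  have psd: "partial_star_design k V A" using assms(5) .
  have finV: "finite V" using assms(3) .
  have cV: "card V = 3 * k + 1" using assms(4) .
  have finA: "finite A" using assms(6) card.infinite by fastforce
  have k3: "k \<ge> 3" using assms(2) .
  have kpos: "k > 0" using k3 by simp
  define F where "F = arcs A"
  define c where "c x = card {S\<in>A. fst S = x}" for x
  define inF where "inF y = card {x. (x,y) \<in> F}" for y
  have FV: "F \<subseteq> V \<times> V" using arcs_V[OF psd] unfolding F_def .
  have Fanti: "\<And>x y. (x,y) \<in> F \<Longrightarrow> (y,x) \<notin> F" using arcs_anti[OF psd] unfolding F_def by blast
  have Fiff: "\<And>x y. (x,y) \<in> F \<longleftrightarrow> (\<exists>S\<in>A. fst S = x \<and> y \<in> snd S)" unfolding F_def arcs_iff by simp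
  have outF: "\<And>x. card {y. (x,y) \<in> F} = k * c x" using out_arcs_card[OF psd finA] unfolding F_def c_def by blast
  have inF1: "\<And>y. inF y \<le> card {S\<in>A. y \<in> snd S}" using in_arcs_card(1)[OF psd finA] unfolding inF_def F_def by blast
  have inF2: "\<And>y. card {S\<in>A. y \<in> snd S} \<le> 4 - c y" using in_arcs_card(2)[OF psd finA] assms(6) unfolding c_def by simp
  have cA: "\<And>x. c x \<le> 4"
  proof -
    fix x have "{S\<in>A. fst S = x} \<subseteq> A" by blast
    then have "card {S\<in>A. fst S = x} \<le> card A" using finA by (rule card_mono[rotated])
    then show "c x \<le> 4" unfolding c_def using assms(6) by simp
  qed
  have inF_le: "\<And>y. inF y + c y \<le> 4"
  proof -
    fix y have "inF y \<le> 4 - c y" using inF1[of y] inF2[of y] by (rule le_trans)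
    then show "inF y + c y \<le> 4" using cA[of y] by linarith
  qed
  have starS: "\<And>S. S \<in> A \<Longrightarrow> fst S \<in> V \<and> snd S \<subseteq> V - {fst S} \<and> finite (snd S) \<and> card (snd S) = k"
    using psd_star[OF psd] by blast
  have finOut: "\<And>x. finite {y. (x,y) \<in> F}"
  proof -
    fix x have "{y. (x,y) \<in> F} \<subseteq> V" using FV by blast
    then show "finite {y. (x,y) \<in> F}" using finV finite_subset by blast
  qed
  have m1: "card V mod k = 1 mod k" unfolding cV by (simp add: mod_Suc)
  have ub: "int (card A) = u_bound (card V) k"
  proof -
    have "int (card V) - 1 = 3 * int k" using cV by simp
    then have "2 * (int (card V) - 1) div int k = 6"
      using kpos by simp
    then show ?thesis unfolding u_bound_def using m1 assms(6) by simp
  qed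
  have NR: "\<And>S. S \<in> A \<Longrightarrow> \<exists>T\<in>A. fst S \<in> snd T"
  proof -
    fix S assume S: "S \<in> A"
    have "\<not> (\<exists>v. (\<exists>S\<in>A. fst S = v) \<and> (\<forall>S\<in>A. v \<notin> snd S))"
      using assms(7) m1 ub unfolding reducible_def by blast
    then show "\<exists>T\<in>A. fst S \<in> snd T" using S by blast
  qed
  have cpos: "\<And>x. c x \<ge> 1 \<longleftrightarrow> x \<in> fst ` A"
  proof -
    fix x
    have "c x \<ge> 1 \<longleftrightarrow> {S\<in>A. fst S = x} \<noteq> {}" unfolding c_def using finA
      by (simp add: Suc_le_eq card_gt_0_iff)
    also have "\<dots> \<longleftrightarrow> x \<in> fst ` A" by (auto intro: rev_image_eqI)
    finally show "c x \<ge> 1 \<longleftrightarrow> x \<in> fst ` A" .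
  qed
  have cposI: "\<And>x. c x \<ge> 1 \<Longrightarrow> x \<in> fst ` A" using cpos by blast
  have c_le2: "\<And>x. c x \<le> 2"
  proof (rule ccontr)
    fix x assume "\<not> c x \<le> 2"
    then have c3: "c x \<ge> 3" by simp
    then have "x \<in> fst ` A" by (intro cposI) simp
    then obtain S0 where S0: "S0 \<in> A" "fst S0 = x" by blast
    have xV: "x \<in> V" using starS[OF S0(1)] S0(2) by simp
    have sub: "{y. (x,y) \<in> F} \<subseteq> V - {x}" using FV Fanti by auto
    have "card (V - {x}) = 3 * k" using cV xV finV by simp
    also have "\<dots> \<le> k * c x" using c3 by simp
    also have "\<dots> = card {y. (x,y) \<in> F}" using outF by simp
    finally have "{y. (x,y) \<in> F} = V - {x}"
      using card_seteq[OF _ sub] finV by blast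
    moreover obtain T where T: "T \<in> A" "x \<in> snd T" using NR[OF S0(1)] S0(2) by blast
    moreover have "fst T \<in> V - {x}" using starS[OF T(1)] T(2) by auto
    ultimately have "(x, fst T) \<in> F" by blast
    moreover have "(fst T, x) \<in> F" using Fiff T by blast
    ultimately show False using Fanti by blast
  qed
  have c2u: "\<And>u w. c u = 2 \<Longrightarrow> c w = 2 \<Longrightarrow> u = w"
  proof (rule ccontr)
    fix u w assume cu: "c u = 2" and cw: "c w = 2" and uw: "u \<noteq> w"
    define Au where "Au = {S\<in>A. fst S = u}"
    define Aw where "Aw = {S\<in>A. fst S = w}"
    have "card (Au \<union> Aw) = card Au + card Aw"
      unfolding Au_def Aw_def using finA uw by (intro card_Un_disjoint) auto
    also have "\<dots> = card A" using cu cw assms(6) unfolding Au_def Aw_def c_def by simp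
    finally have AuAw: "Au \<union> Aw = A" using finA by (intro card_subset_eq) (auto simp: Au_def Aw_def)
    have leaf: "\<And>x y. c x = 2 \<Longrightarrow> x \<noteq> y \<Longrightarrow> {S\<in>A. fst S = x} \<union> {S\<in>A. fst S = y} = A \<Longrightarrow> (y,x) \<in> F"
    proof -
      fix x y assume cx: "c x = 2" and xy: "x \<noteq> y" and un: "{S\<in>A. fst S = x} \<union> {S\<in>A. fst S = y} = A"
      have "x \<in> fst ` A" using cx by (intro cposI) simp
      then obtain S0 where S0: "S0 \<in> A" "fst S0 = x" by blast
      obtain T where T: "T \<in> A" "x \<in> snd T" using NR[OF S0(1)] S0(2) by blast
      have "fst T \<noteq> x" using starS[OF T(1)] T(2) by auto
      then have "fst T = y" using T(1) un by blast
      then show "(y,x) \<in> F" using Fiff T by blast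
    qed
    have "(w,u) \<in> F" using leaf[OF cu uw] AuAw unfolding Au_def Aw_def by blast
    moreover have "(u,w) \<in> F" using leaf[OF cw uw[symmetric]] AuAw unfolding Au_def Aw_def by blast
    ultimately show False using Fanti by blast
  qed
  have allleaf: "\<And>y S. c y = 1 \<Longrightarrow> 3 \<le> inF y \<Longrightarrow> S \<in> A \<Longrightarrow> fst S \<noteq> y \<Longrightarrow> y \<in> snd S"
  proof -
    fix y S assume cy: "c y = 1" and iy: "3 \<le> inF y" and S: "S \<in> A" and Sy: "fst S \<noteq> y"
    have sub: "{S\<in>A. y \<in> snd S} \<subseteq> A - {S\<in>A. fst S = y}"
    proof
      fix S assume S: "S \<in> {S\<in>A. y \<in> snd S}"
      then have "snd S \<subseteq> V - {fst S}" using starS by blast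
      then show "S \<in> A - {S\<in>A. fst S = y}" using S by auto
    qed
    have "card (A - {S\<in>A. fst S = y}) = 3" using cy assms(6) finA unfolding c_def
      by (subst card_Diff_subset) auto
    also have "\<dots> \<le> card {S\<in>A. y \<in> snd S}" using iy inF1[of y] by simp
    finally have "{S\<in>A. y \<in> snd S} = A - {S\<in>A. fst S = y}"
      using card_seteq[OF _ sub] finA by blast
    then show "y \<in> snd S" using S Sy by blast
  qed
  have Eu: "\<And>y1 y2. c y1 = 1 \<Longrightarrow> 3 \<le> inF y1 \<Longrightarrow> c y2 = 1 \<Longrightarrow> 3 \<le> inF y2 \<Longrightarrow> y1 = y2"
  proof (rule ccontr)
    fix y1 y2 assume a: "c y1 = 1" "3 \<le> inF y1" "c y2 = 1" "3 \<le> inF y2" and ne: "y1 \<noteq> y2"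
    have "y2 \<in> fst ` A" using a(3) by (intro cposI) simp
    then obtain S2 where S2: "S2 \<in> A" "fst S2 = y2" by blast
    have "y1 \<in> snd S2" using allleaf[OF a(1,2) S2(1)] S2(2) ne by simp
    then have f1: "(y2,y1) \<in> F" using Fiff S2 by blast
    have "y1 \<in> fst ` A" using a(1) by (intro cposI) simp
    then obtain S1 where S1: "S1 \<in> A" "fst S1 = y1" by blast
    have "y2 \<in> snd S1" using allleaf[OF a(3,4) S1(1)] S1(2) ne by simp
    then have "(y1,y2) \<in> F" using Fiff S1 by blast
    then show False using f1 Fanti by blast
  qed
  have cardF: "card F \<le> 4 * k" using arcs_card[OF psd finA] assms(6) unfolding F_def by simp
  have sumin: "\<And>T. T \<subseteq> V \<Longrightarrow> sum inF T = card (F \<inter> (V \<times> T))"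
    unfolding inF_def using sum_in[OF finV FV] by blast
  have sumV: "sum inF V \<le> 4 * k"
  proof -
    have "F \<inter> (V \<times> V) = F" using FV by blast
    then show ?thesis using sumin[OF order_refl] cardF by simp
  qed
  define m where "m = (3 * k + 1) div 2"
  have m2: "2 * m = 3 * k + 1" unfolding m_def using assms(1) by presburger
  define C where "C = fst ` A"
  have CV: "C \<subseteq> V" unfolding C_def using starS by blast
  have cardC: "card C \<le> 4" unfolding C_def using card_image_le[OF finA, of fst] assms(6) by simp
  have Cc: "\<And>x. x \<in> C \<longleftrightarrow> c x \<ge> 1" unfolding C_def using cpos by simp
  define P3 where "P3 = {y\<in>V. 3 \<le> inF y}"
  have cP3: "card P3 \<le> m"
  proof -
    have "3 * card P3 = (\<Sum>y\<in>P3. 3)" by simp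
    also have "\<dots> \<le> sum inF P3" by (rule sum_mono) (simp add: P3_def)
    also have "\<dots> \<le> sum inF V" by (rule sum_mono2[OF finV]) (auto simp: P3_def)
    finally show ?thesis using sumV m2 by linarith
  qed
  define Good where "Good = V - C - P3"
  have cGood: "m - card C \<le> card Good"
  proof -
    have fP3: "finite P3" unfolding P3_def using finV by simp
    have "card (V - C) = card V - card C" using CV finV by (simp add: card_Diff_subset finite_subset)
    moreover have "card (V - C) - card P3 \<le> card Good" unfolding Good_def
      using diff_card_le_card_Diff[OF fP3] .
    ultimately show ?thesis using cV cP3 m2 by linarith
  qed
  obtain Q where Q: "Q \<subseteq> Good" "card Q = m - card C" "finite Q"
    using obtain_subset_with_card_n[OF cGood] by metis
  define R where "R = C \<union> Q"
  have RV: "R \<subseteq> V" using CV Q(1) unfolding R_def Good_def by blast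
  have m5: "m \<ge> 5" using m2 k3 by linarith
  have cR: "card R = m"
  proof -
    have "card R = card C + card Q" unfolding R_def
      using Q finV CV by (intro card_Un_disjoint) (auto simp: Good_def finite_subset)
    then show ?thesis using Q(2) cardC m5 by simp
  qed
  define d where "d x = (if x \<in> R then 2 * k else k)" for x
  have sumd_split: "\<And>T. T \<subseteq> V \<Longrightarrow> sum d T = 2 * k * card (T \<inter> R) + k * card (T - R)"
  proof -
    fix T assume TV: "T \<subseteq> V"
    have fT: "finite T" using TV finV finite_subset by blast
    have "sum d T = sum d (T \<inter> R) + sum d (T - R)"
      using fT by (metis Diff_Diff_Int Diff_subset inf_le1 sum.subset_diff finite_Diff add.commute)
    also have "sum d (T \<inter> R) = 2 * k * card (T \<inter> R)" unfolding d_def by simp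
    also have "sum d (T - R) = k * card (T - R)" unfolding d_def by simp
    finally show "sum d T = 2 * k * card (T \<inter> R) + k * card (T - R)" .
  qed
  have sumdV: "2 * sum d V = card V * (card V - 1)"
  proof -
    have "V \<inter> R = R" using RV by blast
    moreover have "card (V - R) = m" using cV cR m2 RV finV by (simp add: card_Diff_subset finite_subset)
    ultimately have "sum d V = 2 * k * m + k * m" using sumd_split[OF order_refl] cR by simp
    then have "2 * sum d V = 3 * k * (2 * m)" by (simp add: algebra_simps)
    also have "\<dots> = (3 * k + 1) * (3 * k)" using m2 by (simp add: algebra_simps)
    finally show ?thesis using cV by simp
  qed
  have dC: "\<And>x. x \<in> C \<Longrightarrow> d x = 2 * k" unfolding d_def R_def by simp
  have dk: "\<And>x. k \<le> d x" unfolding d_def by simp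
  have cond: "\<And>S. S \<subseteq> V \<Longrightarrow> card S * (card S - 1) + 2 * card (F \<inter> (S \<times> (V - S))) \<le> 2 * sum d S"
  proof -
    fix S assume SV: "S \<subseteq> V"
    define s where "s = card S"
    define T where "T = V - S"
    have fS: "finite S" using SV finV finite_subset by blast
    have fT: "finite T" unfolding T_def using finV by simp
    have cSV: "card S \<le> card V" using card_mono[OF finV SV] .
    have "card T = card V - card S" unfolding T_def using SV finV
      by (simp add: card_Diff_subset finite_subset)
    then have cT: "card T + s = 3 * k + 1" unfolding s_def using cSV cV by simp
    show "card S * (card S - 1) + 2 * card (F \<inter> (S \<times> (V - S))) \<le> 2 * sum d S"
    proof (cases "s \<le> 2 * k + 1")
      case sSmall: True
      define fo where "fo x = card {y\<in>T. (x,y) \<in> F}" for x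
      have Fsig: "F \<inter> (S \<times> T) = Sigma S (\<lambda>x. {y\<in>T. (x,y) \<in> F})" by auto
      have cardFS: "card (F \<inter> (S \<times> T)) = sum fo S"
        unfolding Fsig fo_def using fS fT by simp
      have fo1: "\<And>x. fo x \<le> k * c x"
      proof -
        fix x have "{y\<in>T. (x,y) \<in> F} \<subseteq> {y. (x,y) \<in> F}" by blast
        then have "fo x \<le> card {y. (x,y) \<in> F}" unfolding fo_def using finOut by (intro card_mono) auto
        then show "fo x \<le> k * c x" using outF by simp
      qed
      have fo2: "\<And>x. fo x \<le> card T" unfolding fo_def using fT by (intro card_mono) auto
      have per: "\<And>x. c x \<le> 1 \<Longrightarrow> fo x + k \<le> d x"
      proof -
        fix x assume cx: "c x \<le> 1"
        show "fo x + k \<le> d x"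
        proof (cases "c x = 0")
          case True then show ?thesis using fo1[of x] dk[of x] by simp
        next
          case False
          then have "c x = 1" using cx by simp
          then have "x \<in> C" using Cc by simp
          then show ?thesis using fo1[of x] dC[of x] \<open>c x = 1\<close> by simp
        qed
      qed
      show ?thesis
      proof (cases "\<exists>w\<in>S. c w = 2")
        case False
        have "\<forall>x\<in>S. c x \<le> 1"
        proof
          fix x assume "x \<in> S"
          then have "c x \<noteq> 2" using False by blast
          then show "c x \<le> 1" using c_le2[of x] by simp
        qed
        then have "(\<Sum>x\<in>S. fo x + k) \<le> sum d S" using per by (intro sum_mono) auto
        then have "sum fo S + k * s \<le> sum d S" unfolding s_def by (simp add: sum.distrib mult.commute)
        moreover have "s * (s - 1) \<le> 2 * k * s" using arith2 sSmall by blast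
        ultimately show ?thesis using cardFS unfolding s_def T_def by linarith
      next
        case True
        then obtain w where wS: "w \<in> S" and cw: "c w = 2" by blast
        have others: "\<forall>x\<in>S - {w}. c x \<le> 1"
        proof
          fix x assume "x \<in> S - {w}"
          then have "c x \<noteq> 2" using c2u cw by blast
          then show "c x \<le> 1" using c_le2[of x] by simp
        qed
        then have "(\<Sum>x\<in>S - {w}. fo x + k) \<le> sum d (S - {w})" using per by (intro sum_mono) auto
        then have s1: "sum fo (S - {w}) + k * (s - 1) \<le> sum d (S - {w})"
          unfolding s_def using wS fS by (simp add: sum.distrib mult.commute)
        have s2: "sum fo S = fo w + sum fo (S - {w})" using sum.remove[OF fS wS] .
        have s3: "sum d S = d w + sum d (S - {w})" using sum.remove[OF fS wS] .
        have dw: "d w = 2 * k" using dC Cc cw by simp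
        have fw1: "fo w \<le> 2 * k" using fo1[of w] cw by simp
        have fw2: "fo w + s \<le> 3 * k + 1" using fo2[of w] cT by simp
        have s_ge: "s \<ge> 1" unfolding s_def using wS fS by (simp add: Suc_le_eq card_gt_0_iff) blast
        have "s * (s - 1) + 2 * fo w \<le> 4 * k + 2 * k * (s - 1)"
          using arith1[OF s_ge sSmall fw1 fw2] .
        then show ?thesis using cardFS s1 s2 s3 dw unfolding s_def T_def by linarith
      qed
    next
      case False
      then have sbig: "s \<ge> 2 * k + 2" by simp
      show ?thesis
      proof (cases "T = {}")
        case True
        then have "S = V" unfolding T_def using SV by blast
        then show ?thesis using sumdV by simp
      next
        case Tne: False
        define t where "t = card T"
        have t1: "t \<ge> 1" unfolding t_def using Tne fT by (simp add: Suc_le_eq card_gt_0_iff)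
        have TV: "T \<subseteq> V" unfolding T_def by blast
        define E where "E = {y\<in>V. c y = 1 \<and> 3 \<le> inF y}"
        have cE: "card (T \<inter> E) \<le> 1"
        proof -
          have "\<forall>a\<in>T \<inter> E. \<forall>b\<in>T \<inter> E. a = b"
          proof (intro ballI)
            fix a b assume "a \<in> T \<inter> E" "b \<in> T \<inter> E"
            then have "c a = 1" "3 \<le> inF a" "c b = 1" "3 \<le> inF b" unfolding E_def by auto
            then show "a = b" by (rule Eu)
          qed
          moreover have "finite (T \<inter> E)" using fT by simp
          ultimately have "card (T \<inter> E) \<le> Suc 0" using card_le_Suc0_iff_eq by blast
          then show ?thesis by simp
        qed
        have pv: "\<And>y. y \<in> V \<Longrightarrow> inF y + d y \<le> 2 * k + 2 + (if y \<in> E then 1 else 0)"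
        proof -
          fix y assume yV: "y \<in> V"
          show "inF y + d y \<le> 2 * k + 2 + (if y \<in> E then 1 else 0)"
          proof (cases "y \<in> R")
            case False
            then show ?thesis using inF_le[of y] k3 unfolding d_def by simp
          next
            case yR: True
            show ?thesis
            proof (cases "y \<in> C")
              case False
              then have "y \<in> Q" using yR unfolding R_def by blast
              then have "y \<notin> P3" using Q(1) unfolding Good_def by blast
              then have "inF y \<le> 2" using yV unfolding P3_def by simp
              then show ?thesis using yR unfolding d_def by simp
            next
              case True
              then have cy: "c y \<ge> 1" using Cc by simp
              show ?thesis
              proof (cases "inF y \<le> 2")
                case True then show ?thesis using yR unfolding d_def by simp
              next
                case False
                then have "inF y = 3" "c y = 1" using inF_le[of y] cy by linarith+
                then have "y \<in> E" unfolding E_def using yV by simp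
                then show ?thesis using yR \<open>inF y = 3\<close> unfolding d_def by simp
              qed
            qed
          qed
        qed
        have "(\<Sum>y\<in>T. inF y + d y) \<le> (\<Sum>y\<in>T. 2 * k + 2 + (if y \<in> E then 1 else 0))"
          using pv TV by (intro sum_mono) blast
        also have "\<dots> = t * (2 * k + 2) + card (T \<inter> E)"
        proof -
          have i1: "(\<Sum>y\<in>T. (if y \<in> E then 1 else 0::nat)) = card (T \<inter> E)"
          proof -
            have "(\<Sum>y\<in>T. (if y \<in> E then 1 else 0::nat)) = (\<Sum>y\<in>{x\<in>T. x \<in> E}. 1)"
              using sum.inter_filter[OF fT, of "\<lambda>_. 1::nat" "\<lambda>x. x \<in> E"] by simp
            also have "\<dots> = card (T \<inter> E)" by (simp add: Int_def)
            finally show ?thesis .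
          qed
          have "(\<Sum>y\<in>T. 2 * k + 2 + (if y \<in> E then 1 else 0)) = (\<Sum>y\<in>T. 2 * k + 2) + (\<Sum>y\<in>T. (if y \<in> E then 1 else 0::nat))"
            by (rule sum.distrib)
          then show ?thesis using i1 unfolding t_def by (simp add: mult.commute)
        qed
        finally have sT: "sum inF T + sum d T \<le> t * (2 * k + 2) + 1"
          using cE by (simp add: sum.distrib)
        have ST: "S = V - T" unfolding T_def using SV by blast
        have sdS: "sum d S + sum d T = sum d V"
          unfolding ST using sum.subset_diff[OF TV finV, of d] by simp
        have c1: "card (F \<inter> (S \<times> T)) \<le> card (F \<inter> (V \<times> T))"
          using SV finV FV by (intro card_mono) (auto intro: finite_subset)
        have ar: "s * (s - 1) + 2 * (t * (2 * k + 2) + 1) \<le> (3 * k + 1) * (3 * k)"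
          by (rule arith3[OF t1 _ sbig k3]) (use cT t_def in simp)
        have "card V * (card V - 1) = (3 * k + 1) * (3 * k)" using cV by simp
        then have N: "2 * sum d V = (3 * k + 1) * (3 * k)" using sumdV by simp
        have lin: "X + 2 * cFS \<le> 2 * dS" if "X + 2 * (P + 1) \<le> N" "iT + dT \<le> P + 1"
           "dS + dT = dV" "cFS \<le> cFV" "iT = cFV" "2 * dV = N" for X P N cFS cFV iT dT dS dV :: nat
          using that by presburger
        show ?thesis using lin[OF ar sT sdS c1 sumin[OF TV] N] unfolding s_def T_def .
      qed
    qed
  qed
  obtain D where tD: "tourn V D" and FD: "F \<subseteq> D" and outD: "\<forall>x\<in>V. outd D x = d x"
    using hakimi[OF finV FV Fanti sumdV cond] by blast
  have mult: "\<forall>x\<in>V. \<exists>j. card {y. (x,y) \<in> D - arcs A} = j * k"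
  proof
    fix x assume xV: "x \<in> V"
    have DV: "D \<subseteq> V \<times> V" using tournD(1)[OF tD] .
    have fin1: "finite {y. (x,y) \<in> D - F}"
    proof -
      have "{y. (x,y) \<in> D - F} \<subseteq> V" using DV by blast
      then show ?thesis using finV finite_subset by blast
    qed
    have un: "{y. (x,y) \<in> D} = {y. (x,y) \<in> D - F} \<union> {y. (x,y) \<in> F}" using FD by blast
    have "card {y. (x,y) \<in> D} = card {y. (x,y) \<in> D - F} + card {y. (x,y) \<in> F}"
      unfolding un by (rule card_Un_disjoint[OF fin1 finOut]) blast
    then have eq: "card {y. (x,y) \<in> D - F} + k * c x = d x"
      using outD xV outF unfolding outd_def by simp
    define delta where "delta = (if x \<in> R then 2 else 1::nat)"
    have "d x = k * delta" unfolding d_def delta_def by simp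
    then have "card {y. (x,y) \<in> D - F} = k * delta - k * c x" using eq by simp
    also have "\<dots> = (delta - c x) * k" by (simp add: diff_mult_distrib2 mult.commute)
    finally show "\<exists>j. card {y. (x,y) \<in> D - arcs A} = j * k" unfolding F_def by blast
  qed
  show ?thesis
    by (rule complete_from_tourn[OF psd kpos tD _ mult]) (use FD F_def in simp)
qed

end
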